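(* For every $y\in(0,1)$, $$\frac{\pi}{2}\,y\cot\left(\frac{\pi y}{2}\right)\log y\le\log\left(\sin\left(\frac{\pi y}{2}\right)\right),\qquad y\coth(y)\log y\le\log(\sinh(y)),$$ $$\log\left(\tan\left(\frac{\pi y}{2}\right)\right)\ge\frac{\pi}{2}\,y\log(y)\csc\left(\frac{\pi y}{2}\right)\sec\left(\frac{\pi y}{2}\right).$$ *)

theory Defs
  imports Complex_Main
begin

definition coth :: "real \<Rightarrow> real" where "coth x = cosh x / sinh x"
definition csc :: "real \<Rightarrow> real" where "csc x = 1 / sin x"
definition sec :: "real \<Rightarrow> real" where "sec x = 1 / cos x"

end

theory Submission
  imports Defs
begin

lemma sinh_ge_self: "0 \<le> (y::real) \<Longrightarrow> y \<le> sinh y"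
proof -
  assume y: "0 \<le> y"
  have "(\<lambda>x. sinh x - x) 0 \<le> (\<lambda>x. sinh x - x) y"
    apply (rule DERIV_nonneg_imp_nondecreasing[OF y])
    subgoal for x by (rule exI[of _ "cosh x - 1"]) (auto intro!: derivative_eq_intros cosh_real_ge_1)
    done
  then show ?thesis by simp
qed

lemma cosh_mult_ge_sinh: "0 \<le> (y::real) \<Longrightarrow> sinh y \<le> y * cosh y"
proof -
  assume y: "0 \<le> y"
  have "(\<lambda>x. x * cosh x - sinh x) 0 \<le> (\<lambda>x. x * cosh x - sinh x) y"
    apply (rule DERIV_nonneg_imp_nondecreasing[OF y])
    subgoal for x by (rule exI[of _ "x * sinh x"]) (auto intro!: derivative_eq_intros)
    done
  then show ?thesis by simp
qed

lemma sin_ge_mult_cos: "0 \<le> (u::real) \<Longrightarrow> u \<le> pi \<Longrightarrow> u * cos u \<le> sin u"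
proof -
  assume u: "0 \<le> u" "u \<le> pi"
  have "(\<lambda>x. sin x - x * cos x) 0 \<le> (\<lambda>x. sin x - x * cos x) u"
    apply (rule DERIV_nonneg_imp_nondecreasing[OF u(1)])
    subgoal for x by (rule exI[of _ "x * sin x"]) (use u in \<open>auto intro!: derivative_eq_intros sin_ge_zero mult_nonneg_nonneg\<close>)
    done
  then show ?thesis by simp
qed

lemma sin_cos_le: "0 \<le> (u::real) \<Longrightarrow> sin u * cos u \<le> u"
proof -
  assume u: "0 \<le> u"
  have "sin (2*u) \<le> 2*u" using sin_x_le_x[of "2*u"] u by simp
  then show ?thesis by (simp add: sin_double)
qed

lemma deriv_eq_aux:
  fixes S C p l x :: real
  assumes "S > 0" "S^2 + C^2 = 1"
  shows "C * p / (S * 2) -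
        (((p * C - S * p * (p * x) / 2) * l + p * C) * (2 * S) -
         p * x * C * l * (C * p)) / (4 * (S * S)) =
        p * l * (p * x / 2 - S * C) / (2 * S^2)"
proof -
  have "(C*C + S*S)*(S*S*(l*p*p*x*8)) = S*S*(l*p*p*x*8)" using assms(2) by (simp add: power2_eq_square)
  then show ?thesis using assms(1)
    by (simp add: field_simps power2_eq_square)
qed

lemma sin_part:
  fixes y :: real
  assumes y: "0 < y" "y < 1"
  shows "pi / 2 * y * cot (pi * y / 2) * ln y \<le> ln (sin (pi * y / 2))"
proof -
  define G where "G x = ln (sin (pi * x / 2)) - pi / 2 * x * (cos (pi * x / 2) / sin (pi * x / 2)) * ln x" for x
  have "G 1 \<le> G y"
  proof (rule DERIV_nonpos_imp_nonincreasing[of y 1 G])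
    fix x assume x: "y \<le> x" "x \<le> 1"
    define u where "u = pi * x / 2"
    have u: "0 < u" "u \<le> pi/2" using x y by (auto simp: u_def)
    have s: "sin u > 0" using u by (intro sin_gt_zero) auto
    have x0: "x > 0" using x y by auto
    have D: "(G has_real_derivative (pi/2) * ln x * (u - sin u * cos u) / (sin u)^2) (at x)"
      unfolding G_def
      using s x0 unfolding u_def
      apply (auto intro!: derivative_eq_intros)
      apply (rule deriv_eq_aux)
      using sin_cos_squared_add[of "pi*x/2"] by auto
    have "ln x \<le> 0" using x x0 by simp
    moreover have "u - sin u * cos u \<ge> 0" using sin_cos_le[of u] u by simp
    moreover have "(pi/2) * ln x \<le> 0" using \<open>ln x \<le> 0\<close> by (intro mult_nonneg_nonpos) auto
    ultimately have "(pi/2) * ln x * (u - sin u * cos u) / (sin u)^2 \<le> 0"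
      using mult_nonpos_nonneg[of "pi/2*ln x" "u - sin u * cos u"] by (simp add: divide_le_0_iff)
    with D show "\<exists>d. (G has_real_derivative d) (at x) \<and> d \<le> 0" by blast
  qed (use y in auto)
  moreover have "G 1 = 0" by (simp add: G_def)
  ultimately show ?thesis by (simp add: G_def cot_def)
qed

theorem lemma4p4:
  fixes y :: real
  assumes "0 < y" and "y < 1"
  shows "pi / 2 * y * cot (pi * y / 2) * ln y \<le> ln (sin (pi * y / 2)) \<and>
         y * coth y * ln y \<le> ln (sinh y) \<and>
         ln (tan (pi * y / 2)) \<ge> pi / 2 * y * ln y * csc (pi * y / 2) * sec (pi * y / 2)"
proof (intro conjI)
  show "pi / 2 * y * cot (pi * y / 2) * ln y \<le> ln (sin (pi * y / 2))"
    using sin_part assms by blast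
  have L: "ln y < 0" using assms by simp
  have sh: "sinh y > 0" using assms by simp
  have "y * coth y \<ge> 1" using cosh_mult_ge_sinh[of y] assms sh by (simp add: coth_def field_simps)
  hence "y * coth y * ln y \<le> ln y" using L by (simp add: mult_le_cancel_right1)
  also have "ln y \<le> ln (sinh y)" using sinh_ge_self[of y] assms sh by simp
  finally show "y * coth y * ln y \<le> ln (sinh y)" .
  define u where "u = pi * y / 2"
  have u: "0 < u" "u < pi/2" using assms by (auto simp: u_def)
  have s: "sin u > 0" using u by (intro sin_gt_zero) auto
  have c: "cos u > 0" using u by (intro cos_gt_zero) auto
  have yu: "y \<le> u" using assms pi_ge_two by (simp add: u_def)
  have "u * cos u \<le> sin u" using sin_ge_mult_cos[of u] u by simp
  hence "u \<le> tan u" using c by (simp add: tan_def field_simps)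
  have "u / (sin u * cos u) \<ge> 1" using sin_cos_le[of u] u s c by simp
  hence "pi / 2 * y * ln y * csc (pi * y / 2) * sec (pi * y / 2) = (u / (sin u * cos u)) * ln y"
    by (simp add: u_def csc_def sec_def)
  also have "\<dots> \<le> 1 * ln y" using L \<open>u / (sin u * cos u) \<ge> 1\<close> by (intro mult_right_mono_neg) auto
  also have "\<dots> = ln y" by simp
  also have "ln y \<le> ln (tan u)" using \<open>u \<le> tan u\<close> yu assms by simp
  finally show "ln (tan (pi * y / 2)) \<ge> pi / 2 * y * ln y * csc (pi * y / 2) * sec (pi * y / 2)"
    by (simp add: u_def)
qed

end
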